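(* Let $\Sigma$ be a set of labels, $h\in\mathbb{N}_0$, and let $\mathcal{G}$ be a set of finite simple undirected graphs each equipped with a vertex labelling $\mathrm{lab}:V(G)\to\Sigma$. Let $\mathcal{V}$ be the disjoint union of the vertex sets of the graphs in $\mathcal{G}$, let $\mathrm{lab}_0,\dots,\mathrm{lab}_h$ be the Weisfeiler-Lehman colourings, and define the base kernel $k(u,v)=\sum_{i=0}^h[\mathrm{lab}_i(u)=\mathrm{lab}_i(v)]$ on $\mathcal{V}$ (where $[\cdot]$ is $1$ if the condition holds and $0$ otherwise). Then: (i) for all $u,v\in\mathcal{V}$ and $i<h$, $\mathrm{lab}_i(u)\ne\mathrm{lab}_i(v)$ implies $\mathrm{lab}_{i+1}(u)\ne\mathrm{lab}_{i+1}(v)$; (ii) $k$ is a strong kernel on $\mathcal{V}$; (iii) the Weisfeiler-Lehman optimal assignment kernel $K(G,H)=\mathrm{OA}_k(V(G),V(H))$ satisfies $$K(G,H)=\sum_{i=0}^h\sum_{c}\min\{|\{v\in V(G):\mathrm{lab}_i(v)=c\}|,\,|\{v\in V(H):\mathrm{lab}_i(v)=c\}|\},$$ the inner sum ranging over all colours $c$; and (iv) $K$ is a valid kernel on $\mathcal{G}$.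
   Context: Weisfeiler-Lehman colourings: $\mathrm{lab}_0=\mathrm{lab}$, and for $i\ge1$, for every vertex $v$ of a graph $G\in\mathcal{G}$ form the sequence consisting of $\mathrm{lab}_{i-1}(v)$ followed by the lexicographically sorted multiset $\{\mathrm{lab}_{i-1}(u): uv\in E(G)\}$ of colours of its neighbours; then $\mathrm{lab}_i(v)$ is the image of this sequence under a fixed injective map from sequences to new colours, the same map being used for all graphs in $\mathcal{G}$. A strong kernel on a set $\mathcal{X}$ is a symmetric function $k:\mathcal{X}\times\mathcal{X}\to\mathbb{R}_{\ge 0}$ such that $k(x,y)\ge\min\{k(x,z),k(z,y)\}$ for all $x,y,z\in\mathcal{X}$. A valid kernel on a set $\mathcal{S}$ is a symmetric function $K:\mathcal{S}\times\mathcal{S}\to\mathbb{R}$ such that for every finite collection $s_1,\dots,s_m\in\mathcal{S}$ the matrix $(K(s_i,s_j))_{i,j}$ is positive semidefinite. For finite sets $A,B$ and a nonnegative function $k$ on pairs of their elements, $\mathrm{OA}_k(A,B)=\max_{\sigma}\sum_{a\in A}k(a,\sigma(a))$ over all injections $\sigma:A\to B$ if $|A|\le|B|$, and $\mathrm{OA}_k(A,B)=\mathrm{OA}_k(B,A)$ if $|A|>|B|$ (equivalently: pad the smaller set with new elements $z$ having $k(z,\cdot)=0$ and maximize over bijections). *)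

theory Defs
  imports Complex_Main "HOL-Library.Multiset"
begin

text \<open>The disjoint union of the
  vertex sets is represented by the set of pairs (g, v) with v in V g.
  Colours live in a linearly ordered type 'c (which contains the labels);
  f is the fixed injective map from colour sequences to colours.\<close>

definition finite_simple_graph :: "'v set \<Rightarrow> ('v \<Rightarrow> 'v \<Rightarrow> bool) \<Rightarrow> bool" where
  "finite_simple_graph V E \<longleftrightarrow> finite V \<and> (\<forall>u v. E u v \<longrightarrow> u \<in> V \<and> v \<in> V)
     \<and> (\<forall>u v. E u v \<longrightarrow> E v u) \<and> (\<forall>v. \<not> E v v)"

definition disj_union :: "'g set \<Rightarrow> ('g \<Rightarrow> 'v set) \<Rightarrow> ('g \<times> 'v) set" where
  "disj_union \<G> V = {(g, v). g \<in> \<G> \<and> v \<in> V g}"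

primrec wl :: "('c::linorder list \<Rightarrow> 'c) \<Rightarrow> ('g \<Rightarrow> 'v set) \<Rightarrow> ('g \<Rightarrow> 'v \<Rightarrow> 'v \<Rightarrow> bool)
    \<Rightarrow> ('g \<Rightarrow> 'v \<Rightarrow> 'c) \<Rightarrow> nat \<Rightarrow> 'g \<times> 'v \<Rightarrow> 'c" where
  "wl f V E lab 0 x = lab (fst x) (snd x)"
| "wl f V E lab (Suc i) x =
     f (wl f V E lab i x #
        sorted_list_of_multiset
          (image_mset (\<lambda>u. wl f V E lab i (fst x, u))
             (mset_set {u \<in> V (fst x). E (fst x) u (snd x)})))"

definition wl_base_kernel :: "('c::linorder list \<Rightarrow> 'c) \<Rightarrow> ('g \<Rightarrow> 'v set) \<Rightarrow> ('g \<Rightarrow> 'v \<Rightarrow> 'v \<Rightarrow> bool)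
    \<Rightarrow> ('g \<Rightarrow> 'v \<Rightarrow> 'c) \<Rightarrow> nat \<Rightarrow> 'g \<times> 'v \<Rightarrow> 'g \<times> 'v \<Rightarrow> real" where
  "wl_base_kernel f V E lab h x y =
     (\<Sum>i\<in>{0..h}. if wl f V E lab i x = wl f V E lab i y then 1 else 0)"

definition strong_kernel :: "'x set \<Rightarrow> ('x \<Rightarrow> 'x \<Rightarrow> real) \<Rightarrow> bool" where
  "strong_kernel X k \<longleftrightarrow>
     (\<forall>x\<in>X. \<forall>y\<in>X. k x y = k y x \<and> k x y \<ge> 0) \<and>
     (\<forall>x\<in>X. \<forall>y\<in>X. \<forall>z\<in>X. k x y \<ge> min (k x z) (k z y))"

definition valid_kernel :: "'s set \<Rightarrow> ('s \<Rightarrow> 's \<Rightarrow> real) \<Rightarrow> bool" where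
  "valid_kernel S K \<longleftrightarrow>
     (\<forall>x\<in>S. \<forall>y\<in>S. K x y = K y x) \<and>
     (\<forall>xs c. set xs \<subseteq> S \<longrightarrow>
        (\<Sum>i<length xs. \<Sum>j<length xs. c i * c j * K (xs ! i) (xs ! j)) \<ge> 0)"

definition oa_inj :: "('x \<Rightarrow> 'x \<Rightarrow> real) \<Rightarrow> 'x set \<Rightarrow> 'x set \<Rightarrow> real" where
  "oa_inj k A B = Max {(\<Sum>a\<in>A. k a (\<sigma> a)) | \<sigma>. inj_on \<sigma> A \<and> \<sigma> ` A \<subseteq> B}"

definition OA :: "('x \<Rightarrow> 'x \<Rightarrow> real) \<Rightarrow> 'x set \<Rightarrow> 'x set \<Rightarrow> real" where
  "OA k A B = (if card A \<le> card B then oa_inj k A B else oa_inj k B A)"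

definition wl_oa_kernel :: "('c::linorder list \<Rightarrow> 'c) \<Rightarrow> ('g \<Rightarrow> 'v set) \<Rightarrow> ('g \<Rightarrow> 'v \<Rightarrow> 'v \<Rightarrow> bool)
    \<Rightarrow> ('g \<Rightarrow> 'v \<Rightarrow> 'c) \<Rightarrow> nat \<Rightarrow> 'g \<Rightarrow> 'g \<Rightarrow> real" where
  "wl_oa_kernel f V E lab h g g' =
     OA (wl_base_kernel f V E lab h) ({g} \<times> V g) ({g'} \<times> V g')"

end

theory Submission
  imports Defs "HOL-Library.FuncSet"
begin

definition refine :: "(nat \<Rightarrow> 'x \<Rightarrow> 'c) \<Rightarrow> bool" where
 "refine L \<longleftrightarrow> (\<forall>i x y. L (Suc i) x = L (Suc i) y \<longrightarrow> L i x = L i y)"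

lemma refine_down: assumes "refine L" "L j x = L j y" "i \<le> j" shows "L i x = L i y"
  using assms(2,3)
proof (induction j)
  case 0 then show ?case by simp
next
  case (Suc j)
  show ?case proof (cases "i = Suc j")
    case True then show ?thesis using Suc by simp
  next
    case False
    have "L j x = L j y" using assms(1) Suc.prems(1) unfolding refine_def by blast
    then show ?thesis using Suc False by simp
  qed
qed

definition kk :: "(nat \<Rightarrow> 'x \<Rightarrow> 'c) \<Rightarrow> nat \<Rightarrow> 'x \<Rightarrow> 'x \<Rightarrow> real" where
 "kk L h x y = (\<Sum>i\<in>{0..h}. if L i x = L i y then 1 else 0)"

lemma kk_card: "kk L h x y = real (card {i\<in>{0..h}. L i x = L i y})"
  unfolding kk_def using sum.inter_filter[of "{0..h}" "\<lambda>_. 1::real" "\<lambda>i. L i x = L i y", symmetric]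
  by simp

lemma seg_card:
  assumes "refine L" "L i x = L i y" "L i u \<noteq> L i w" "i \<le> h"
  shows "card {j\<in>{0..h}. L j u = L j w} < card {j\<in>{0..h}. L j x = L j y}"
proof -
  have "{j\<in>{0..h}. L j u = L j w} \<subseteq> {0..<i}"
  proof
    fix j assume j: "j \<in> {j\<in>{0..h}. L j u = L j w}"
    show "j \<in> {0..<i}"
    proof (rule ccontr)
      assume "j \<notin> {0..<i}"
      then have "i \<le> j" by simp
      then have "L i u = L i w" using refine_down[OF assms(1), of j u w i] j by simp
      with assms(3) show False by simp
    qed
  qed
  then have 1: "card {j\<in>{0..h}. L j u = L j w} \<le> i"
    using card_mono[of "{0..<i}"] by fastforce
  have "{0..i} \<subseteq> {j\<in>{0..h}. L j x = L j y}"
    using refine_down[OF assms(1) assms(2)] assms(4) by auto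
  then have "Suc i \<le> card {j\<in>{0..h}. L j x = L j y}"
    using card_mono[of "{j\<in>{0..h}. L j x = L j y}" "{0..i}"] by simp
  with 1 show ?thesis by simp
qed

lemma kk_strong:
  assumes "refine L"
  shows "kk L h x y \<ge> min (kk L h x z) (kk L h z y)"
proof -
  define SP where "SP = {j\<in>{0..h}. L j x = L j z}"
  define SQ where "SQ = {j\<in>{0..h}. L j z = L j y}"
  define SR where "SR = {j\<in>{0..h}. L j x = L j y}"
  have fin: "finite SP" "finite SQ" "finite SR" unfolding SP_def SQ_def SR_def by auto
  have "SP \<subseteq> SQ \<or> SQ \<subseteq> SP"
  proof (rule ccontr)
    assume "\<not> ?thesis"
    then obtain i j where i: "i \<in> SP" "i \<notin> SQ" and j: "j \<in> SQ" "j \<notin> SP" by blast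
    have "card SQ < card SP" unfolding SP_def SQ_def
      using seg_card[OF assms, of i x z z y h] i unfolding SP_def SQ_def by auto
    moreover have "card SP < card SQ"
      using seg_card[OF assms, of j z y x z h] j unfolding SP_def SQ_def by auto
    ultimately show False by simp
  qed
  moreover have "SP \<inter> SQ \<subseteq> SR" unfolding SP_def SQ_def SR_def by auto
  ultimately have "min (card SP) (card SQ) \<le> card SR"
    using card_mono[OF fin(3)] card_mono[OF fin(1)] card_mono[OF fin(2)]
    by (metis Int_absorb1 Int_absorb2 min.absorb1 min.absorb2 min.cobounded1 min.cobounded2
        order_trans)
  then show ?thesis unfolding kk_card SP_def SQ_def SR_def by simp
qed


definition cnt :: "(nat \<Rightarrow> 'x \<Rightarrow> 'c) \<Rightarrow> nat \<Rightarrow> 'x set \<Rightarrow> 'c \<Rightarrow> nat" where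
 "cnt L i A c = card {a\<in>A. L i a = c}"
definition Tc :: "(nat \<Rightarrow> 'x \<Rightarrow> 'c) \<Rightarrow> nat \<Rightarrow> 'x set \<Rightarrow> 'x set \<Rightarrow> 'c set \<Rightarrow> real" where
 "Tc L i A B C = (\<Sum>c\<in>C. real (min (cnt L i A c) (cnt L i B c)))"
definition HI :: "(nat \<Rightarrow> 'x \<Rightarrow> 'c) \<Rightarrow> nat \<Rightarrow> 'x set \<Rightarrow> 'x set \<Rightarrow> real" where
 "HI L h A B = (\<Sum>i\<in>{0..h}. Tc L i A B (L i ` A \<union> L i ` B))"

lemma cnt_out: "c \<notin> L i ` A \<Longrightarrow> cnt L i A c = 0"
  unfolding cnt_def by (metis (mono_tags, lifting) card.empty empty_Collect_eq image_eqI)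

lemma Tc_sup:
  assumes "finite C" "L i ` A \<union> L i ` B \<subseteq> C"
  shows "Tc L i A B (L i ` A \<union> L i ` B) = Tc L i A B C"
  unfolding Tc_def
  by (rule sum.mono_neutral_left) (use assms in \<open>auto simp: cnt_out\<close>)

lemma cnt_remove: "finite A \<Longrightarrow> a \<in> A \<Longrightarrow>
   cnt L i (A - {a}) c = cnt L i A c - (if L i a = c then 1 else 0)"
proof -
  assume "finite A" "a \<in> A"
  have "{x\<in>A-{a}. L i x = c} = {x\<in>A. L i x = c} - {a}" by auto
  then show ?thesis unfolding cnt_def using \<open>finite A\<close> \<open>a \<in> A\<close>
    by (simp add: card_Diff_singleton_if)
qed

lemma cnt_pos: "finite A \<Longrightarrow> a \<in> A \<Longrightarrow> cnt L i A (L i a) \<ge> 1"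
  unfolding cnt_def using card_gt_0_iff[of "{x\<in>A. L i x = L i a}"] by auto

lemma Tc_step_le:
  assumes "finite A" "finite B" "a \<in> A" "b \<in> B"
  shows "Tc L i (A-{a}) (B-{b}) C \<le> Tc L i A B C"
  unfolding Tc_def using assms
  by (auto simp: cnt_remove intro!: sum_mono min.mono)

lemma Tc_step_eq:
  assumes "finite A" "finite B" "a \<in> A" "b \<in> B" "finite C" "L i a \<in> C" "L i a = L i b"
  shows "Tc L i A B C = 1 + Tc L i (A-{a}) (B-{b}) C"
proof -
  have pt: "real (min (cnt L i A c) (cnt L i B c)) =
     real (min (cnt L i (A-{a}) c) (cnt L i (B-{b}) c)) + (if c = L i a then 1 else 0)" for c
  proof (cases "c = L i a")
    case True
    have "cnt L i A c \<ge> 1" "cnt L i B c \<ge> 1" using cnt_pos assms True by metis+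
    then show ?thesis using True assms by (simp add: cnt_remove)
  next
    case False
    then show ?thesis using assms by (simp add: cnt_remove)
  qed
  have "Tc L i A B C = (\<Sum>c\<in>C. real (min (cnt L i (A-{a}) c) (cnt L i (B-{b}) c)) + (if c = L i a then 1 else 0))"
    unfolding Tc_def using pt by simp
  also have "\<dots> = Tc L i (A-{a}) (B-{b}) C + 1"
    unfolding Tc_def sum.distrib using assms(5,6) by simp
  finally show ?thesis by simp
qed

lemma Tc_zero:
  assumes "\<forall>a'\<in>A. \<forall>b'\<in>B. L i a' \<noteq> L i b'"
  shows "Tc L i A B C = 0"
proof -
  have "min (cnt L i A c) (cnt L i B c) = 0" for c
  proof (rule ccontr)
    assume "min (cnt L i A c) (cnt L i B c) \<noteq> 0"
    then have "cnt L i A c \<noteq> 0" "cnt L i B c \<noteq> 0" by auto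
    then obtain a' b' where "a' \<in> A" "L i a' = c" "b' \<in> B" "L i b' = c"
      unfolding cnt_def by (metis (mono_tags, lifting) card.empty empty_Collect_eq)
    with assms show False by metis
  qed
  then show ?thesis unfolding Tc_def by simp
qed

lemma HI_reindex:
  assumes "finite A" "finite B"
  shows "HI L h (A-{a}) (B-{b}) = (\<Sum>i\<in>{0..h}. Tc L i (A-{a}) (B-{b}) (L i`A \<union> L i`B))"
  unfolding HI_def
  by (rule sum.cong[OF refl], rule Tc_sup) (use assms in auto)

lemma HI_le:
  assumes "finite A" "finite B" "a \<in> A" "b \<in> B"
  shows "kk L h a b + HI L h (A-{a}) (B-{b}) \<le> HI L h A B"
proof -
  have "kk L h a b + HI L h (A-{a}) (B-{b}) =
    (\<Sum>i\<in>{0..h}. (if L i a = L i b then 1 else 0) + Tc L i (A-{a}) (B-{b}) (L i`A \<union> L i`B))"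
    unfolding kk_def HI_reindex[OF assms(1,2)] sum.distrib by simp
  also have "\<dots> \<le> HI L h A B" unfolding HI_def
  proof (rule sum_mono)
    fix i assume "i \<in> {0..h}"
    show "(if L i a = L i b then 1 else 0) + Tc L i (A-{a}) (B-{b}) (L i`A \<union> L i`B)
       \<le> Tc L i A B (L i ` A \<union> L i ` B)"
    proof (cases "L i a = L i b")
      case True
      then show ?thesis using Tc_step_eq[OF assms, of "L i ` A \<union> L i ` B" L i] assms by simp
    next
      case False
      then show ?thesis using Tc_step_le[OF assms] by simp
    qed
  qed
  finally show ?thesis .
qed

lemma HI_eq:
  assumes "refine L" "finite A" "finite B" "a \<in> A" "b \<in> B"
    and mx: "\<forall>a'\<in>A. \<forall>b'\<in>B. kk L h a' b' \<le> kk L h a b"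
  shows "kk L h a b + HI L h (A-{a}) (B-{b}) = HI L h A B"
proof -
  have "kk L h a b + HI L h (A-{a}) (B-{b}) =
    (\<Sum>i\<in>{0..h}. (if L i a = L i b then 1 else 0) + Tc L i (A-{a}) (B-{b}) (L i`A \<union> L i`B))"
    unfolding kk_def HI_reindex[OF assms(2,3)] sum.distrib by simp
  also have "\<dots> = HI L h A B" unfolding HI_def
  proof (rule sum.cong[OF refl])
    fix i assume i: "i \<in> {0..h}"
    show "(if L i a = L i b then 1 else 0) + Tc L i (A-{a}) (B-{b}) (L i`A \<union> L i`B)
       = Tc L i A B (L i ` A \<union> L i ` B)"
    proof (cases "L i a = L i b")
      case True
      then show ?thesis using Tc_step_eq[OF assms(2-5), of "L i ` A \<union> L i ` B" L i] assms by simp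
    next
      case False
      have np: "\<forall>a'\<in>A. \<forall>b'\<in>B. L i a' \<noteq> L i b'"
      proof (intro ballI notI)
        fix a' b' assume ab: "a' \<in> A" "b' \<in> B" "L i a' = L i b'"
        have "card {j\<in>{0..h}. L j a = L j b} < card {j\<in>{0..h}. L j a' = L j b'}"
          using seg_card[OF assms(1) ab(3) False] i by simp
        then have "kk L h a b < kk L h a' b'" unfolding kk_card by simp
        with mx ab show False by fastforce
      qed
      then have "\<forall>a'\<in>A-{a}. \<forall>b'\<in>B-{b}. L i a' \<noteq> L i b'" by blast
      then show ?thesis using False Tc_zero np by (simp add: Tc_zero)
    qed
  qed
  finally show ?thesis .
qed

lemma HI_nonneg: "HI L h A B \<ge> 0"
  unfolding HI_def Tc_def by (intro sum_nonneg) auto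

lemma HI_empty: "HI L h {} B = 0"
  unfolding HI_def Tc_def cnt_def by simp

lemma HI_sym: "HI L h A B = HI L h B A"
  unfolding HI_def Tc_def by (simp add: Un_commute min.commute)

lemma oa_upper:
  "finite A \<Longrightarrow> finite B \<Longrightarrow> inj_on \<sigma> A \<Longrightarrow> \<sigma>`A \<subseteq> B \<Longrightarrow>
    (\<Sum>a\<in>A. kk L h a (\<sigma> a)) \<le> HI L h A B"
proof (induction A arbitrary: B rule: finite_induct)
  case empty then show ?case using HI_nonneg by simp
next
  case (insert a A)
  have "\<sigma> ` A \<subseteq> B - {\<sigma> a}" using insert.prems insert.hyps(2) by (auto simp: inj_on_def)
  then have "(\<Sum>x\<in>A. kk L h x (\<sigma> x)) \<le> HI L h A (B - {\<sigma> a})"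
    using insert by (auto simp: inj_on_insert)
  moreover have "kk L h a (\<sigma> a) + HI L h (insert a A - {a}) (B - {\<sigma> a}) \<le> HI L h (insert a A) B"
    by (rule HI_le) (use insert in auto)
  ultimately show ?case using insert.hyps by simp
qed

lemma oa_exists:
  "refine L \<Longrightarrow> finite A \<Longrightarrow> finite B \<Longrightarrow> card A \<le> card B \<Longrightarrow>
    \<exists>\<sigma>. inj_on \<sigma> A \<and> \<sigma>`A \<subseteq> B \<and> (\<Sum>a\<in>A. kk L h a (\<sigma> a)) = HI L h A B"
proof (induction "card A" arbitrary: A B)
  case 0
  then have "A = {}" by simp
  then show ?case by (simp add: HI_empty)
next
  case (Suc n)
  have "A \<noteq> {}" "B \<noteq> {}" using Suc.hyps(2) Suc.prems by auto
  define g where "g = (\<lambda>p. kk L h (fst p) (snd p))"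
  have fS: "finite (A \<times> B)" "A \<times> B \<noteq> {}" using Suc.prems \<open>A \<noteq> {}\<close> \<open>B \<noteq> {}\<close> by auto
  have "Max (g ` (A \<times> B)) \<in> g ` (A \<times> B)" using fS by (intro Max_in) auto
  then obtain p where p: "p \<in> A \<times> B" "g p = Max (g ` (A \<times> B))" by auto
  define a b where "a = fst p" "b = snd p"
  have ab: "a \<in> A" "b \<in> B" using p a_b_def by auto
  have mx: "\<forall>a'\<in>A. \<forall>b'\<in>B. kk L h a' b' \<le> kk L h a b"
  proof (intro ballI)
    fix a' b' assume "a' \<in> A" "b' \<in> B"
    then have "g (a', b') \<le> Max (g ` (A \<times> B))" using fS by (intro Max_ge) auto
    then show "kk L h a' b' \<le> kk L h a b" using p a_b_def g_def by simp
  qed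
  have "n = card (A - {a})" using Suc.hyps(2) ab by simp
  moreover have "card (A - {a}) \<le> card (B - {b})" using Suc.prems ab by simp
  ultimately obtain \<sigma>' where s: "inj_on \<sigma>' (A-{a})" "\<sigma>'`(A-{a}) \<subseteq> B-{b}"
     "(\<Sum>x\<in>A-{a}. kk L h x (\<sigma>' x)) = HI L h (A-{a}) (B-{b})"
    using Suc.hyps(1)[of "A - {a}" "B - {b}"] Suc.prems by auto
  define \<sigma> where "\<sigma> = \<sigma>'(a := b)"
  have "inj_on \<sigma> A"
    unfolding inj_on_def \<sigma>_def
  proof (intro ballI impI)
    fix x y assume xy: "x \<in> A" "y \<in> A" "(\<sigma>'(a := b)) x = (\<sigma>'(a := b)) y"
    show "x = y"
    proof (cases "x = a"; cases "y = a")
      assume "x = a" "y \<noteq> a"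
      then have "\<sigma>' y = b" using xy by simp
      then show ?thesis using s(2) xy \<open>y \<noteq> a\<close> by auto
    next
      assume "x \<noteq> a" "y = a"
      then have "\<sigma>' x = b" using xy by simp
      then show ?thesis using s(2) xy \<open>x \<noteq> a\<close> by auto
    next
      assume "x \<noteq> a" "y \<noteq> a"
      then show ?thesis using s(1) xy by (auto simp: inj_on_def)
    qed simp
  qed
  moreover have "\<sigma> ` A \<subseteq> B" using s(2) ab unfolding \<sigma>_def by auto
  moreover have "(\<Sum>x\<in>A. kk L h x (\<sigma> x)) = kk L h a b + (\<Sum>x\<in>A-{a}. kk L h x (\<sigma>' x))"
    using sum.remove[of A a "\<lambda>x. kk L h x (\<sigma> x)"] Suc.prems ab unfolding \<sigma>_def by simp
  ultimately show ?case using s(3) HI_eq[OF Suc.prems(1-3) ab mx] by metis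
qed

lemma vals_finite:
  assumes "finite A" "finite B"
  shows "finite {(\<Sum>a\<in>A. k a (\<sigma> a)) | \<sigma>. inj_on \<sigma> A \<and> \<sigma>`A \<subseteq> B}"
proof (rule finite_subset)
  show "{(\<Sum>a\<in>A. k a (\<sigma> a)) | \<sigma>. inj_on \<sigma> A \<and> \<sigma>`A \<subseteq> B} \<subseteq> (\<lambda>\<tau>. \<Sum>a\<in>A. k a (\<tau> a)) ` (A \<rightarrow>\<^sub>E B)"
  proof
    fix x assume "x \<in> {(\<Sum>a\<in>A. k a (\<sigma> a)) | \<sigma>. inj_on \<sigma> A \<and> \<sigma>`A \<subseteq> B}"
    then obtain \<sigma> where "x = (\<Sum>a\<in>A. k a (\<sigma> a))" "\<sigma>`A \<subseteq> B" by auto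
    then show "x \<in> (\<lambda>\<tau>. \<Sum>a\<in>A. k a (\<tau> a)) ` (A \<rightarrow>\<^sub>E B)"
      by (intro image_eqI[of _ _ "restrict \<sigma> A"]) auto
  qed
  show "finite ((\<lambda>\<tau>. \<Sum>a\<in>A. k a (\<tau> a)) ` (A \<rightarrow>\<^sub>E B))"
    using assms by (intro finite_imageI finite_PiE) auto
qed

lemma oa_inj_HI:
  assumes "refine L" "finite A" "finite B" "card A \<le> card B"
  shows "oa_inj (kk L h) A B = HI L h A B"
  unfolding oa_inj_def
proof (rule Max_eqI)
  show "finite {(\<Sum>a\<in>A. kk L h a (\<sigma> a)) | \<sigma>. inj_on \<sigma> A \<and> \<sigma>`A \<subseteq> B}"
    using vals_finite assms by blast
  show "y \<le> HI L h A B" if "y \<in> {(\<Sum>a\<in>A. kk L h a (\<sigma> a)) | \<sigma>. inj_on \<sigma> A \<and> \<sigma>`A \<subseteq> B}" for y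
    using that oa_upper assms by blast
  show "HI L h A B \<in> {(\<Sum>a\<in>A. kk L h a (\<sigma> a)) | \<sigma>. inj_on \<sigma> A \<and> \<sigma>`A \<subseteq> B}"
    using oa_exists[OF assms, of h] by (metis (mono_tags, lifting) mem_Collect_eq)
qed

lemma OA_HI:
  assumes "refine L" "finite A" "finite B"
  shows "OA (kk L h) A B = HI L h A B"
  using oa_inj_HI[OF assms] oa_inj_HI[OF assms(1,3,2)] HI_sym unfolding OA_def by auto


lemma psd_features:
  fixes \<phi> :: "'s \<Rightarrow> 'j \<Rightarrow> real"
  assumes "finite J"
    and K: "\<And>p q. p < length xs \<Longrightarrow> q < length xs \<Longrightarrow>
             K (xs!p) (xs!q) = (\<Sum>j\<in>J. \<phi> (xs!p) j * \<phi> (xs!q) j)"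
  shows "(\<Sum>p<length xs. \<Sum>q<length xs. c p * c q * K (xs!p) (xs!q)) \<ge> 0"
proof -
  let ?n = "length xs"
  have "(\<Sum>p<?n. \<Sum>q<?n. c p * c q * K (xs!p) (xs!q)) =
        (\<Sum>p<?n. \<Sum>q<?n. \<Sum>j\<in>J. (c p * \<phi> (xs!p) j) * (c q * \<phi> (xs!q) j))"
    by (intro sum.cong refl) (simp add: K sum_distrib_left mult_ac)
  also have "\<dots> = (\<Sum>p<?n. \<Sum>j\<in>J. \<Sum>q<?n. (c p * \<phi> (xs!p) j) * (c q * \<phi> (xs!q) j))"
    by (intro sum.cong refl) (rule sum.swap)
  also have "\<dots> = (\<Sum>j\<in>J. \<Sum>p<?n. \<Sum>q<?n. (c p * \<phi> (xs!p) j) * (c q * \<phi> (xs!q) j))"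
    by (rule sum.swap)
  also have "\<dots> = (\<Sum>j\<in>J. (\<Sum>p<?n. c p * \<phi> (xs!p) j) * (\<Sum>q<?n. c q * \<phi> (xs!q) j))"
    by (simp add: sum_product)
  also have "\<dots> \<ge> 0" by (intro sum_nonneg) simp
  finally show ?thesis .
qed

lemma min_as_sum:
  assumes "m \<le> N"
  shows "real (min m n) = (\<Sum>t<N. (if t < m then 1 else 0) * (if t < n then (1::real) else 0))"
proof -
  have "(\<Sum>t<N. (if t < m then 1 else 0) * (if t < n then (1::real) else 0)) =
        (\<Sum>t<N. if t < min m n then 1 else 0)"
    by (intro sum.cong refl) auto
  also have "\<dots> = real (card {t\<in>{..<N}. t < min m n})"
    using sum.inter_filter[of "{..<N}" "\<lambda>_. 1::real" "\<lambda>t. t < min m n", symmetric] by simp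
  also have "{t\<in>{..<N}. t < min m n} = {..<min m n}" using assms by auto
  finally show ?thesis by simp
qed

lemma cnt_le: "finite A \<Longrightarrow> cnt L i A c \<le> card A"
  unfolding cnt_def by (intro card_mono) auto

lemma HI_features:
  assumes "finite A" "finite B" "finite C" "\<And>i. i \<le> h \<Longrightarrow> L i ` A \<union> L i ` B \<subseteq> C"
    "card A \<le> N"
  shows "HI L h A B = (\<Sum>i\<in>{0..h}. \<Sum>c\<in>C. \<Sum>t<N.
            (if t < cnt L i A c then 1 else 0) * (if t < cnt L i B c then 1 else 0))"
  unfolding HI_def
proof (intro sum.cong refl)
  fix i assume "i \<in> {0..h}"
  then have "Tc L i A B (L i ` A \<union> L i ` B) = Tc L i A B C"
    using assms by (intro Tc_sup) auto
  also have "\<dots> = (\<Sum>c\<in>C. \<Sum>t<N.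
            (if t < cnt L i A c then 1 else 0) * (if t < cnt L i B c then 1 else 0))"
    unfolding Tc_def
    by (intro sum.cong refl min_as_sum order_trans[OF cnt_le assms(5)] assms(1))
  finally show "Tc L i A B (L i ` A \<union> L i ` B) = (\<Sum>c\<in>C. \<Sum>t<N.
            (if t < cnt L i A c then 1 else 0) * (if t < cnt L i B c then (1::real) else 0))" .
qed

lemma cnt_pair: "cnt L i ({g} \<times> S) c = card {v\<in>S. L i (g, v) = c}"
proof -
  have "{a\<in>{g} \<times> S. L i a = c} = Pair g ` {v\<in>S. L i (g, v) = c}" by auto
  then show ?thesis unfolding cnt_def by (simp add: card_image inj_on_def)
qed


theorem mainTheorem11:
  fixes \<Sigma> :: "'c::linorder set"
    and \<G> :: "'g set"
    and V :: "'g \<Rightarrow> 'v set"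
    and E :: "'g \<Rightarrow> 'v \<Rightarrow> 'v \<Rightarrow> bool"
    and lab :: "'g \<Rightarrow> 'v \<Rightarrow> 'c"
    and f :: "'c list \<Rightarrow> 'c"
    and h :: nat
  assumes graphs: "\<forall>g\<in>\<G>. finite_simple_graph (V g) (E g)"
    and labels: "\<forall>g\<in>\<G>. lab g ` V g \<subseteq> \<Sigma>"
    and inj_f: "inj f"
  shows "(\<forall>x\<in>disj_union \<G> V. \<forall>y\<in>disj_union \<G> V. \<forall>i<h.
            wl f V E lab i x \<noteq> wl f V E lab i y \<longrightarrow>
            wl f V E lab (Suc i) x \<noteq> wl f V E lab (Suc i) y)
       \<and> strong_kernel (disj_union \<G> V) (wl_base_kernel f V E lab h)
       \<and> (\<forall>g\<in>\<G>. \<forall>g'\<in>\<G>.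
            wl_oa_kernel f V E lab h g g' =
            (\<Sum>i\<in>{0..h}. \<Sum>c\<in>wl f V E lab i ` ({g} \<times> V g) \<union> wl f V E lab i ` ({g'} \<times> V g').
               real (min (card {v \<in> V g. wl f V E lab i (g, v) = c})
                         (card {v \<in> V g'. wl f V E lab i (g', v) = c}))))
       \<and> valid_kernel \<G> (wl_oa_kernel f V E lab h)"
proof -
  let ?L = "wl f V E lab"
  have ref: "refine ?L" unfolding refine_def
    using injD[OF inj_f] by auto
  have kk_eq: "wl_base_kernel f V E lab h = kk ?L h"
    by (intro ext) (simp add: wl_base_kernel_def kk_def)
  have fin: "finite (V g)" if "g \<in> \<G>" for g
    using graphs that unfolding finite_simple_graph_def by auto
  have K_HI: "wl_oa_kernel f V E lab h g g' = HI ?L h ({g} \<times> V g) ({g'} \<times> V g')"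
    if "g \<in> \<G>" "g' \<in> \<G>" for g g'
    unfolding wl_oa_kernel_def kk_eq using OA_HI[OF ref] fin that by simp
  have P1: "\<forall>x\<in>disj_union \<G> V. \<forall>y\<in>disj_union \<G> V. \<forall>i<h.
            wl f V E lab i x \<noteq> wl f V E lab i y \<longrightarrow>
            wl f V E lab (Suc i) x \<noteq> wl f V E lab (Suc i) y"
    using ref unfolding refine_def by blast
  have P2: "strong_kernel (disj_union \<G> V) (wl_base_kernel f V E lab h)"
    unfolding strong_kernel_def kk_eq
  proof (intro conjI ballI)
    fix x y z
    show "kk ?L h x y = kk ?L h y x" unfolding kk_def by (simp add: eq_commute)
    show "kk ?L h x y \<ge> 0" unfolding kk_def by (intro sum_nonneg) auto
    show "kk ?L h x y \<ge> min (kk ?L h x z) (kk ?L h z y)" by (rule kk_strong[OF ref])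
  qed
  have P3: "\<forall>g\<in>\<G>. \<forall>g'\<in>\<G>.
            wl_oa_kernel f V E lab h g g' =
            (\<Sum>i\<in>{0..h}. \<Sum>c\<in>wl f V E lab i ` ({g} \<times> V g) \<union> wl f V E lab i ` ({g'} \<times> V g').
               real (min (card {v \<in> V g. wl f V E lab i (g, v) = c})
                         (card {v \<in> V g'. wl f V E lab i (g', v) = c})))"
    using K_HI by (simp add: HI_def Tc_def cnt_pair)
  have P4: "valid_kernel \<G> (wl_oa_kernel f V E lab h)"
    unfolding valid_kernel_def
  proof (intro conjI allI impI ballI)
    fix x y assume "x \<in> \<G>" "y \<in> \<G>"
    then show "wl_oa_kernel f V E lab h x y = wl_oa_kernel f V E lab h y x"
      using K_HI HI_sym by metis
  next
    fix xs :: "'g list" and c :: "nat \<Rightarrow> real"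
    assume xs: "set xs \<subseteq> \<G>"
    define A where "A = (\<lambda>g. {g} \<times> V g)"
    define C where "C = (\<Union>i\<in>{0..h}. \<Union>g\<in>set xs. ?L i ` A g)"
    define N where "N = (\<Sum>g\<in>set xs. card (A g))"
    define \<phi> where "\<phi> = (\<lambda>g (i, c, t). if t < cnt ?L i (A g) c then 1 else (0::real))"
    have finA: "finite (A g)" if "g \<in> set xs" for g
      using fin xs that unfolding A_def by auto
    have finC: "finite C" unfolding C_def using finA by auto
    show "(\<Sum>i<length xs. \<Sum>j<length xs. c i * c j * wl_oa_kernel f V E lab h (xs ! i) (xs ! j)) \<ge> 0"
    proof (rule psd_features[where J = "{0..h} \<times> C \<times> {..<N}" and \<phi> = \<phi>])
      show "finite ({0..h} \<times> C \<times> {..<N})" using finC by simp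
      fix p q assume pq: "p < length xs" "q < length xs"
      then have mem: "xs!p \<in> set xs" "xs!q \<in> set xs" by auto
      have "wl_oa_kernel f V E lab h (xs ! p) (xs ! q) = HI ?L h (A (xs!p)) (A (xs!q))"
        using K_HI mem xs unfolding A_def by auto
      also have "\<dots> = (\<Sum>i\<in>{0..h}. \<Sum>c\<in>C. \<Sum>t<N.
            (if t < cnt ?L i (A (xs!p)) c then 1 else 0) * (if t < cnt ?L i (A (xs!q)) c then 1 else 0))"
      proof (rule HI_features)
        show "finite (A (xs!p))" "finite (A (xs!q))" using finA mem by auto
        show "finite C" by (rule finC)
        have sub: "?L i ` A g \<subseteq> C" if "i \<le> h" "g \<in> set xs" for i g
        proof -
          have "?L i ` A g \<subseteq> (\<Union>g\<in>set xs. ?L i ` A g)" using that(2) by (rule UN_upper)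
          also have "\<dots> \<subseteq> C" unfolding C_def using that(1)
            by (intro UN_upper[of i "{0..h}" "\<lambda>i. \<Union>g\<in>set xs. ?L i ` A g"]) simp
          finally show ?thesis .
        qed
        show "?L i ` A (xs!p) \<union> ?L i ` A (xs!q) \<subseteq> C" if "i \<le> h" for i
          using sub[OF that mem(1)] sub[OF that mem(2)] by (rule Un_least)
        show "card (A (xs!p)) \<le> N" unfolding N_def
          using mem by (intro member_le_sum) auto
      qed
      also have "\<dots> = (\<Sum>j\<in>{0..h} \<times> C \<times> {..<N}. \<phi> (xs!p) j * \<phi> (xs!q) j)"
        by (simp add: sum.cartesian_product \<phi>_def case_prod_beta)
      finally show "wl_oa_kernel f V E lab h (xs ! p) (xs ! q) =
          (\<Sum>j\<in>{0..h} \<times> C \<times> {..<N}. \<phi> (xs!p) j * \<phi> (xs!q) j)" .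
    qed
  qed
  show ?thesis using P1 P2 P3 P4 by blast
qed

end
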